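(* If $\mathcal{A}$ and $\mathcal{B}$ are leaktight probabilistic automata over the same alphabet with disjoint state sets, then their parallel composition $\mathcal{A}\,\|\,\mathcal{B}$ is leaktight.
   Context: Fix a finite alphabet $A$. A probabilistic automaton is $(Q,\delta_0,\Delta,F)$ with $Q$ finite, an initial distribution $\delta_0$ on $Q$ (a single initial state being the special case of a Dirac distribution), $F\subseteq Q$, $\Delta:Q\times A\to\mathcal{D}(Q)$. For $a\in A$ let $M_a(s,t)=\Delta(s,a)(t)$, for $u=a_0\cdots a_{n-1}$ let $M_u=M_{a_0}\cdots M_{a_{n-1}}$ (identity for the empty word), and $\mathbb{P}(s\xrightarrow{u}t)=M_u(s,t)$. A nonnegative $Q\times Q$ matrix $M$ is idempotent if $M(s,t)>0\iff M^2(s,t)>0$ for all $s,t$; a word $u$ is idempotent if $M_u$ is. A leak is a sequence $(u_n)$ of idempotent words such that $M_{u_n}$ converges to an idempotent matrix $M$ and there exist states $r,q$, both recurrent in the Markov chain with transition matrix $M$, with $\lim_n\mathbb{P}(r\xrightarrow{u_n}q)=0$ and $\mathbb{P}(r\xrightarrow{u_n}q)>0$ for all $n$; an automaton is leaktight if it has no leak (this depends only on $Q$ and $\Delta$). For $\mathcal{A}=(Q^{\mathcal{A}},q_0^{\mathcal{A}},\Delta^{\mathcal{A}},F^{\mathcal{A}})$ and $\mathcal{B}=(Q^{\mathcal{B}},q_0^{\mathcal{B}},\Delta^{\mathcal{B}},F^{\mathcal{B}})$ with $Q^{\mathcal{A}}\cap Q^{\mathcal{B}}=\emptyset$, the parallel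 composition is $\mathcal{A}\,\|\,\mathcal{B}=(Q^{\mathcal{A}}\uplus Q^{\mathcal{B}},\ \tfrac12 q_0^{\mathcal{A}}+\tfrac12 q_0^{\mathcal{B}},\ \Delta,\ F^{\mathcal{A}}\cup F^{\mathcal{B}})$ where $\Delta(q,a)=\Delta^{\mathcal{A}}(q,a)$ if $q\in Q^{\mathcal{A}}$ and $\Delta(q,a)=\Delta^{\mathcal{B}}(q,a)$ if $q\in Q^{\mathcal{B}}$. *)

theory Defs
  imports Complex_Main
begin

text \<open>Probabilistic automata over a finite alphabet (given as a finite set of letters).
  States are drawn from a type 'q; the state set is a finite subset of it.\<close>

record ('q, 'a) pa =
  states :: "'q set"
  init   :: "'q \<Rightarrow> real"
  trans  :: "'q \<Rightarrow> 'a \<Rightarrow> 'q \<Rightarrow> real"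
  final  :: "'q set"

definition is_distr :: "'q set \<Rightarrow> ('q \<Rightarrow> real) \<Rightarrow> bool" where
  "is_distr Q d \<longleftrightarrow> (\<forall>q. 0 \<le> d q) \<and> (\<forall>q. q \<notin> Q \<longrightarrow> d q = 0) \<and> (\<Sum>q\<in>Q. d q) = 1"

definition is_pa :: "'a set \<Rightarrow> ('q, 'a) pa \<Rightarrow> bool" where
  "is_pa A \<A> \<longleftrightarrow> finite (states \<A>) \<and> is_distr (states \<A>) (init \<A>)
     \<and> final \<A> \<subseteq> states \<A>
     \<and> (\<forall>q\<in>states \<A>. \<forall>a\<in>A. is_distr (states \<A>) (trans \<A> q a))"

definition dirac_init :: "('q, 'a) pa \<Rightarrow> bool" where
  "dirac_init \<A> \<longleftrightarrow> (\<exists>q0\<in>states \<A>. init \<A> = (\<lambda>q. if q = q0 then 1 else 0))"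

definition mat_mult :: "'q set \<Rightarrow> ('q \<Rightarrow> 'q \<Rightarrow> real) \<Rightarrow> ('q \<Rightarrow> 'q \<Rightarrow> real) \<Rightarrow> ('q \<Rightarrow> 'q \<Rightarrow> real)" where
  "mat_mult Q M N = (\<lambda>s t. \<Sum>r\<in>Q. M s r * N r t)"

fun word_mat :: "'q set \<Rightarrow> ('q \<Rightarrow> 'a \<Rightarrow> 'q \<Rightarrow> real) \<Rightarrow> 'a list \<Rightarrow> ('q \<Rightarrow> 'q \<Rightarrow> real)" where
  "word_mat Q \<Delta> [] = (\<lambda>s t. if s = t then 1 else 0)"
| "word_mat Q \<Delta> (a # u) = mat_mult Q (\<lambda>s t. \<Delta> s a t) (word_mat Q \<Delta> u)"

definition idempotent_mat :: "'q set \<Rightarrow> ('q \<Rightarrow> 'q \<Rightarrow> real) \<Rightarrow> bool" where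
  "idempotent_mat Q M \<longleftrightarrow> (\<forall>s\<in>Q. \<forall>t\<in>Q. M s t > 0 \<longleftrightarrow> mat_mult Q M M s t > 0)"

definition reach_rel :: "'q set \<Rightarrow> ('q \<Rightarrow> 'q \<Rightarrow> real) \<Rightarrow> ('q \<times> 'q) set" where
  "reach_rel Q M = {(s, t). s \<in> Q \<and> t \<in> Q \<and> M s t > 0}"

definition recurrent :: "'q set \<Rightarrow> ('q \<Rightarrow> 'q \<Rightarrow> real) \<Rightarrow> 'q \<Rightarrow> bool" where
  "recurrent Q M s \<longleftrightarrow> s \<in> Q \<and>
     (\<forall>t. (s, t) \<in> (reach_rel Q M)\<^sup>* \<longrightarrow> (t, s) \<in> (reach_rel Q M)\<^sup>*)"

definition is_leak :: "'a set \<Rightarrow> 'q set \<Rightarrow> ('q \<Rightarrow> 'a \<Rightarrow> 'q \<Rightarrow> real) \<Rightarrow> (nat \<Rightarrow> 'a list) \<Rightarrow> bool" where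
  "is_leak A Q \<Delta> u \<longleftrightarrow>
     (\<forall>n. u n \<in> lists A \<and> idempotent_mat Q (word_mat Q \<Delta> (u n))) \<and>
     (\<exists>M. (\<forall>s\<in>Q. \<forall>t\<in>Q. (\<lambda>n. word_mat Q \<Delta> (u n) s t) \<longlonglongrightarrow> M s t) \<and>
          idempotent_mat Q M \<and>
          (\<exists>r q. recurrent Q M r \<and> recurrent Q M q \<and>
                 (\<lambda>n. word_mat Q \<Delta> (u n) r q) \<longlonglongrightarrow> 0 \<and>
                 (\<forall>n. word_mat Q \<Delta> (u n) r q > 0)))"

definition leaktight :: "'a set \<Rightarrow> ('q, 'a) pa \<Rightarrow> bool" where
  "leaktight A \<A> \<longleftrightarrow> \<not> (\<exists>u. is_leak A (states \<A>) (trans \<A>) u)"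

definition par_comp :: "('q, 'a) pa \<Rightarrow> ('q, 'a) pa \<Rightarrow> ('q, 'a) pa" where
  "par_comp \<A> \<B> =
     \<lparr> states = states \<A> \<union> states \<B>,
       init = (\<lambda>q. init \<A> q / 2 + init \<B> q / 2),
       trans = (\<lambda>q a. if q \<in> states \<A> then trans \<A> q a else trans \<B> q a),
       final = final \<A> \<union> final \<B> \<rparr>"

end

theory Submission
  imports Defs
begin

locale restr =
  fixes A :: "'a set" and Q QA :: "'q set" and \<Delta> \<Delta>A :: "'q \<Rightarrow> 'a \<Rightarrow> 'q \<Rightarrow> real"
  assumes finQ: "finite Q" and sub: "QA \<subseteq> Q"
    and eqD: "\<And>s a t. s \<in> QA \<Longrightarrow> a \<in> A \<Longrightarrow> \<Delta> s a t = \<Delta>A s a t"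
    and zD: "\<And>s a t. s \<in> QA \<Longrightarrow> a \<in> A \<Longrightarrow> t \<notin> QA \<Longrightarrow> \<Delta>A s a t = 0"
begin

lemma finQA: "finite QA" using finQ sub finite_subset by blast

lemma wm_eq:
  shows "u \<in> lists A \<Longrightarrow> s \<in> QA \<Longrightarrow> word_mat Q \<Delta> u s t = word_mat QA \<Delta>A u s t \<and> (t \<notin> QA \<longrightarrow> word_mat QA \<Delta>A u s t = 0)"
proof (induction u arbitrary: s t)
  case Nil
  then show ?case by auto
next
  case (Cons a u)
  have a: "a \<in> A" "u \<in> lists A" using Cons.prems by auto
  have "word_mat Q \<Delta> (a # u) s t = (\<Sum>r\<in>Q. \<Delta> s a r * word_mat Q \<Delta> u r t)"
    by (simp add: mat_mult_def)
  also have "\<dots> = (\<Sum>r\<in>QA. \<Delta> s a r * word_mat Q \<Delta> u r t)"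
    by (rule sum.mono_neutral_right[OF finQ sub]) (use eqD zD Cons.prems a in auto)
  also have "\<dots> = (\<Sum>r\<in>QA. \<Delta>A s a r * word_mat QA \<Delta>A u r t)"
    by (rule sum.cong) (use eqD Cons.IH Cons.prems a in auto)
  also have "\<dots> = word_mat QA \<Delta>A (a # u) s t" by (simp add: mat_mult_def)
  finally have 1: "word_mat Q \<Delta> (a # u) s t = word_mat QA \<Delta>A (a # u) s t" .
  have "t \<notin> QA \<longrightarrow> word_mat QA \<Delta>A (a # u) s t = 0"
    using Cons.IH a by (simp add: mat_mult_def)
  with 1 show ?case by blast
qed

lemma rt:
  assumes "(x, y) \<in> (reach_rel Q M)\<^sup>*" "x \<in> QA"
    and z: "\<And>s t. s \<in> QA \<Longrightarrow> t \<in> Q \<Longrightarrow> t \<notin> QA \<Longrightarrow> M s t = 0"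
  shows "(x, y) \<in> (reach_rel QA M)\<^sup>* \<and> y \<in> QA"
  using assms(1)
proof (induction rule: rtrancl_induct)
  case base
  then show ?case using assms(2) by auto
next
  case (step y w)
  then have "y \<in> QA" "M y w > 0" by (auto simp: reach_rel_def)
  moreover have "w \<in> Q" using step by (auto simp: reach_rel_def)
  ultimately have "w \<in> QA" using z by force
  then have "(y, w) \<in> reach_rel QA M" using \<open>y \<in> QA\<close> \<open>M y w > 0\<close> by (auto simp: reach_rel_def)
  then show ?case using step \<open>w \<in> QA\<close> by (meson rtrancl.rtrancl_into_rtrancl)
qed

lemma reach_sub: "reach_rel QA M \<subseteq> reach_rel Q M"
  using sub by (auto simp: reach_rel_def)

lemma leak_restr:
  assumes "is_leak A Q \<Delta> u"
    and M: "\<forall>s\<in>Q. \<forall>t\<in>Q. (\<lambda>n. word_mat Q \<Delta> (u n) s t) \<longlonglongrightarrow> M s t"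
    "idempotent_mat Q M" "recurrent Q M r" "recurrent Q M q"
    "(\<lambda>n. word_mat Q \<Delta> (u n) r q) \<longlonglongrightarrow> 0" "\<forall>n. word_mat Q \<Delta> (u n) r q > 0"
    and rA: "r \<in> QA"
  shows "is_leak A QA \<Delta>A u"
proof -
  have ul: "\<And>n. u n \<in> lists A" using assms(1) by (auto simp: is_leak_def)
  have idW: "\<And>n. idempotent_mat Q (word_mat Q \<Delta> (u n))" using assms(1) by (auto simp: is_leak_def)
  have W: "\<And>n s t. s \<in> QA \<Longrightarrow> word_mat Q \<Delta> (u n) s t = word_mat QA \<Delta>A (u n) s t"
    using wm_eq ul by blast
  have W0: "\<And>n s t. s \<in> QA \<Longrightarrow> t \<notin> QA \<Longrightarrow> word_mat Q \<Delta> (u n) s t = 0"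
    using wm_eq ul by metis
  have M0: "M s t = 0" if "s \<in> QA" "t \<in> Q" "t \<notin> QA" for s t
  proof -
    have "(\<lambda>n. word_mat Q \<Delta> (u n) s t) \<longlonglongrightarrow> M s t" using M(1) that sub by blast
    moreover have "(\<lambda>n. word_mat Q \<Delta> (u n) s t) = (\<lambda>n. 0)" using W0 that by auto
    ultimately show ?thesis using LIMSEQ_unique tendsto_const by metis
  qed
  have mm: "mat_mult Q N N s t = mat_mult QA N N s t"
    if "s \<in> QA" "\<And>t. t \<in> Q \<Longrightarrow> t \<notin> QA \<Longrightarrow> N s t = 0" for N s t
    unfolding mat_mult_def
    by (rule sum.mono_neutral_right[OF finQ sub]) (use that in auto)
  have mm2: "mat_mult QA N N s t = mat_mult QA N' N' s t"
    if "\<And>x y. x \<in> QA \<Longrightarrow> N x y = N' x y" "s \<in> QA" for N N' s t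
    unfolding mat_mult_def using that by (intro sum.cong) auto
  have idA: "idempotent_mat QA (word_mat QA \<Delta>A (u n))" for n
    unfolding idempotent_mat_def
  proof (intro ballI)
    fix s t assume st: "s \<in> QA" "t \<in> QA"
    have "mat_mult QA (word_mat QA \<Delta>A (u n)) (word_mat QA \<Delta>A (u n)) s t
        = mat_mult QA (word_mat Q \<Delta> (u n)) (word_mat Q \<Delta> (u n)) s t"
      by (rule mm2) (use W st in auto)
    also have "\<dots> = mat_mult Q (word_mat Q \<Delta> (u n)) (word_mat Q \<Delta> (u n)) s t"
      by (rule mm[symmetric]) (use W0 st in auto)
    finally have c: "mat_mult QA (word_mat QA \<Delta>A (u n)) (word_mat QA \<Delta>A (u n)) s t
        = mat_mult Q (word_mat Q \<Delta> (u n)) (word_mat Q \<Delta> (u n)) s t" .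
    have e1: "word_mat Q \<Delta> (u n) s t = word_mat QA \<Delta>A (u n) s t" using W st by blast
    have e2: "(0 < word_mat Q \<Delta> (u n) s t) = (0 < mat_mult Q (word_mat Q \<Delta> (u n)) (word_mat Q \<Delta> (u n)) s t)"
      using idW[of n] st sub unfolding idempotent_mat_def by blast
    show "(0 < word_mat QA \<Delta>A (u n) s t) = (0 < mat_mult QA (word_mat QA \<Delta>A (u n)) (word_mat QA \<Delta>A (u n)) s t)"
      unfolding c e1[symmetric] by (rule e2)
  qed
  have idM: "idempotent_mat QA M"
    unfolding idempotent_mat_def
  proof (intro ballI)
    fix s t assume st: "s \<in> QA" "t \<in> QA"
    have "mat_mult QA M M s t = mat_mult Q M M s t" by (rule mm[symmetric]) (use M0 st in auto)
    then show "(0 < M s t) = (0 < mat_mult QA M M s t)"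
      using M(2) st sub unfolding idempotent_mat_def by auto
  qed
  have conv: "\<forall>s\<in>QA. \<forall>t\<in>QA. (\<lambda>n. word_mat QA \<Delta>A (u n) s t) \<longlonglongrightarrow> M s t"
  proof (intro ballI)
    fix s t assume st: "s \<in> QA" "t \<in> QA"
    have "(\<lambda>n. word_mat QA \<Delta>A (u n) s t) = (\<lambda>n. word_mat Q \<Delta> (u n) s t)" using W st by auto
    then show "(\<lambda>n. word_mat QA \<Delta>A (u n) s t) \<longlonglongrightarrow> M s t" using M(1) st sub by auto
  qed
  have recA: "recurrent QA M x" if "recurrent Q M x" "x \<in> QA" for x
    unfolding recurrent_def
  proof (intro conjI allI impI)
    show "x \<in> QA" by fact
    fix y assume "(x, y) \<in> (reach_rel QA M)\<^sup>*"
    then have xy: "(x, y) \<in> (reach_rel Q M)\<^sup>*" using rtrancl_mono[OF reach_sub] by blast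
    then have "y \<in> QA" using rt[OF xy that(2)] M0 by blast
    moreover have "(y, x) \<in> (reach_rel Q M)\<^sup>*" using xy that(1) unfolding recurrent_def by blast
    ultimately show "(y, x) \<in> (reach_rel QA M)\<^sup>*" using rt M0 by blast
  qed
  have qA: "q \<in> QA"
  proof (rule ccontr)
    assume "q \<notin> QA"
    then have "word_mat Q \<Delta> (u 0) r q = 0" using W0 rA by blast
    then show False using M(6) by (metis less_irrefl)
  qed
  have convrq: "(\<lambda>n. word_mat QA \<Delta>A (u n) r q) \<longlonglongrightarrow> 0" using M(5) W rA by simp
  have posrq: "\<forall>n. word_mat QA \<Delta>A (u n) r q > 0" using M(6) W rA by simp
  show ?thesis unfolding is_leak_def
    using ul idA conv idM recA[OF M(3) rA] recA[OF M(4) qA] convrq posrq by blast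
qed

end

theorem proposition4p4:
  fixes A :: "'a set" and \<A> \<B> :: "('q, 'a) pa"
  assumes "finite A"
    and "is_pa A \<A>" and "is_pa A \<B>"
    and "dirac_init \<A>" and "dirac_init \<B>"
    and "states \<A> \<inter> states \<B> = {}"
    and "leaktight A \<A>" and "leaktight A \<B>"
  shows "leaktight A (par_comp \<A> \<B>)"
proof -
  let ?Q = "states \<A> \<union> states \<B>"
  let ?D = "trans (par_comp \<A> \<B>)"
  have pst: "states (par_comp \<A> \<B>) = ?Q" by (simp add: par_comp_def)
  have fin: "finite ?Q" using assms(2,3) by (simp add: is_pa_def)
  interpret RA: restr A ?Q "states \<A>" ?D "trans \<A>"
    by unfold_locales (use fin assms(2) in \<open>auto simp: par_comp_def is_pa_def is_distr_def\<close>)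
  interpret RB: restr A ?Q "states \<B>" ?D "trans \<B>"
    by unfold_locales (use fin assms(3,6) in \<open>auto simp: par_comp_def is_pa_def is_distr_def\<close>)
  show ?thesis
    unfolding leaktight_def pst
  proof
    assume "\<exists>u. is_leak A ?Q ?D u"
    then obtain u where L: "is_leak A ?Q ?D u" by blast
    then obtain M r q where M: "\<forall>s\<in>?Q. \<forall>t\<in>?Q. (\<lambda>n. word_mat ?Q ?D (u n) s t) \<longlonglongrightarrow> M s t"
      "idempotent_mat ?Q M" "recurrent ?Q M r" "recurrent ?Q M q"
      "(\<lambda>n. word_mat ?Q ?D (u n) r q) \<longlonglongrightarrow> 0" "\<forall>n. word_mat ?Q ?D (u n) r q > 0"
      unfolding is_leak_def by blast
    have "r \<in> ?Q" using M(3) by (simp add: recurrent_def)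
    then show False
    proof
      assume "r \<in> states \<A>"
      then have "is_leak A (states \<A>) (trans \<A>) u" using RA.leak_restr[OF L M] by blast
      then show False using assms(7) unfolding leaktight_def by blast
    next
      assume "r \<in> states \<B>"
      then have "is_leak A (states \<B>) (trans \<B>) u" using RB.leak_restr[OF L M] by blast
      then show False using assms(8) unfolding leaktight_def by blast
    qed
  qed
qed

end
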